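(* Let $p$ be a prime, $q$ a power of $p$, and $F$ a field of characteristic $p$ containing $\mathbb{F}_q$. Let $L=a_0x+a_1x^q+\cdots+a_{n-1}x^{q^{n-1}}+x^{q^n}\in F[x]$ be a monic $q$-polynomial of $q$-degree $n\ge 1$ with $a_0\neq 0$. Let $E$ be a splitting field of $L$ over $F$, let $\alpha_1,\dots,\alpha_n$ be an $\mathbb{F}_q$-basis of the $\mathbb{F}_q$-vector space $V\subseteq E$ of roots of $L$, and let $\delta=\det D$, where $D$ is the $n\times n$ matrix whose $(i,j)$ entry is $\alpha_i^{q^{j-1}}$ ($1\le i,j\le n$). Then $\delta\neq 0$, and: (1) $\delta^{q-1}\in F$; (2) $F(\delta)$ is a normal extension of $F$.
   Context: A $q$-polynomial over $F$ is a polynomial of the form $\sum_{i=0}^n a_i x^{q^i}\in F[x]$; if $a_n\neq0$ its $q$-degree is $n$. When $a_0\neq 0$, the roots of $L$ in $E$ are distinct and form an $n$-dimensional $\mathbb{F}_q$-vector space $V$. *)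

theory Defs
  imports "HOL-Computational_Algebra.Polynomial" "Jordan_Normal_Form.Determinant"
begin

definition is_subfield :: "'a::field set \<Rightarrow> bool" where
  "is_subfield K \<longleftrightarrow> 0 \<in> K \<and> 1 \<in> K \<and>
     (\<forall>x\<in>K. \<forall>y\<in>K. x + y \<in> K \<and> x - y \<in> K \<and> x * y \<in> K) \<and>
     (\<forall>x\<in>K. x \<noteq> 0 \<longrightarrow> inverse x \<in> K)"

definition gen_subfield :: "'a::field set \<Rightarrow> 'a set \<Rightarrow> 'a set" where
  "gen_subfield F S = \<Inter> {K. is_subfield K \<and> F \<union> S \<subseteq> K}"

definition poly_over :: "'a::field set \<Rightarrow> 'a poly \<Rightarrow> bool" where
  "poly_over F P \<longleftrightarrow> (\<forall>i. coeff P i \<in> F)"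

definition splits_in :: "'a::field set \<Rightarrow> 'a poly \<Rightarrow> bool" where
  "splits_in K P \<longleftrightarrow> (\<exists>c rs. P = smult c (\<Prod>r\<leftarrow>rs. [:- r, 1:]) \<and> set rs \<subseteq> K)"

definition is_splitting_field :: "'a::field set \<Rightarrow> 'a set \<Rightarrow> 'a poly \<Rightarrow> bool" where
  "is_splitting_field F E P \<longleftrightarrow> is_subfield E \<and> F \<subseteq> E \<and> splits_in E P \<and>
     E = gen_subfield F {x \<in> E. poly P x = 0}"

definition irreducible_over :: "'a::field set \<Rightarrow> 'a poly \<Rightarrow> bool" where
  "irreducible_over F P \<longleftrightarrow> poly_over F P \<and> degree P \<ge> 1 \<and>
     \<not> (\<exists>A B. poly_over F A \<and> poly_over F B \<and> degree A \<ge> 1 \<and> degree B \<ge> 1 \<and> P = A * B)"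

definition algebraic_over :: "'a::field set \<Rightarrow> 'a \<Rightarrow> bool" where
  "algebraic_over F x \<longleftrightarrow> (\<exists>P. P \<noteq> 0 \<and> poly_over F P \<and> poly P x = 0)"

definition normal_extension :: "'a::field set \<Rightarrow> 'a set \<Rightarrow> bool" where
  "normal_extension F K \<longleftrightarrow> is_subfield F \<and> is_subfield K \<and> F \<subseteq> K \<and>
     (\<forall>x\<in>K. algebraic_over F x) \<and>
     (\<forall>P. irreducible_over F P \<and> (\<exists>x\<in>K. poly P x = 0) \<longrightarrow> splits_in K P)"

definition q_poly :: "nat \<Rightarrow> nat \<Rightarrow> (nat \<Rightarrow> 'a::field) \<Rightarrow> 'a poly" where
  "q_poly q n a = monom 1 (q ^ n) + (\<Sum>i<n. monom (a i) (q ^ i))"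

end

theory Submission
  imports Defs "HOL-Computational_Algebra.Primes"
begin


lemma frob_add:
  fixes x y :: "'a::comm_ring_1"
  assumes "prime (CHAR('a))"
  shows "(x+y)^CHAR('a) = x^CHAR('a) + y^CHAR('a)"
proof -
  let ?p = "CHAR('a)"
  have p: "?p > 1" using assms prime_gt_1_nat by blast
  have "(x+y)^?p = (\<Sum>k\<le>?p. of_nat (?p choose k) * x^k * y^(?p-k))" by (rule binomial_ring)
  also have "\<dots> = (\<Sum>k\<in>{0,?p}. of_nat (?p choose k) * x^k * y^(?p-k))"
  proof (rule sum.mono_neutral_right)
    show "finite {..?p}" by simp
    show "{0,?p} \<subseteq> {..?p}" by auto
    show "\<forall>k\<in>{..?p} - {0,?p}. of_nat (?p choose k) * x^k * y^(?p-k) = 0"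
    proof
      fix k assume k: "k \<in> {..?p} - {0,?p}"
      then have "?p dvd (?p choose k)" using assms by (intro dvd_choose_prime) auto
      then have "of_nat (?p choose k) = (0::'a)" by (simp add: of_nat_eq_0_iff_char_dvd)
      then show "of_nat (?p choose k) * x^k * y^(?p-k) = 0" by simp
    qed
  qed
  also have "\<dots> = x^?p + y^?p" using p by (simp add: add.commute)
  finally show ?thesis .
qed

lemma frob_pow_add:
  fixes x y :: "'a::comm_ring_1"
  assumes "prime (CHAR('a))"
  shows "(x+y)^(CHAR('a)^m) = x^(CHAR('a)^m) + y^(CHAR('a)^m)"
proof (induction m)
  case 0 then show ?case by simp
next
  case (Suc m)
  have "(x+y)^(CHAR('a)^Suc m) = ((x+y)^(CHAR('a)^m))^CHAR('a)"
    by (metis power_Suc2 power_mult)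
  also have "\<dots> = (x^(CHAR('a)^m))^CHAR('a) + (y^(CHAR('a)^m))^CHAR('a)"
    using Suc frob_add[OF assms] by simp
  also have "\<dots> = x^(CHAR('a)^Suc m) + y^(CHAR('a)^Suc m)"
    by (metis power_Suc2 power_mult)
  finally show ?case .
qed

lemma frob_pow_neg:
  fixes x :: "'a::comm_ring_1"
  assumes "prime (CHAR('a))"
  shows "(-x)^(CHAR('a)^m) = - (x^(CHAR('a)^m))"
proof -
  have pos: "CHAR('a)^m > 0" using assms prime_gt_0_nat by simp
  have "0 = (x + -x)^(CHAR('a)^m)" using pos by (simp add: power_0_left)
  also have "\<dots> = x^(CHAR('a)^m) + (-x)^(CHAR('a)^m)" by (rule frob_pow_add[OF assms])
  finally show ?thesis by (simp add: eq_neg_iff_add_eq_0 add.commute)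
qed

lemma frob_pow_diff:
  fixes x y :: "'a::comm_ring_1"
  assumes "prime (CHAR('a))"
  shows "(x-y)^(CHAR('a)^m) = x^(CHAR('a)^m) - y^(CHAR('a)^m)"
  using frob_pow_add[OF assms, of x "-y" m] frob_pow_neg[OF assms, of y m] by simp

lemma frob_pow_sum:
  fixes f :: "'b \<Rightarrow> 'a::comm_ring_1"
  assumes "prime (CHAR('a))"
  shows "(sum f A)^(CHAR('a)^m) = (\<Sum>x\<in>A. (f x)^(CHAR('a)^m))"
proof (induction A rule: infinite_finite_induct)
  case (infinite A) then show ?case using assms prime_gt_0_nat by (simp add: power_0_left)
next
  case empty then show ?case using assms prime_gt_0_nat by (simp add: power_0_left)
next
  case (insert x F) then show ?case by (simp add: frob_pow_add[OF assms])
qed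

lemma frob_signof:
  assumes "prime (CHAR('a::comm_ring_1))"
  shows "(signof p :: 'a)^(CHAR('a)^m) = signof p"
  using frob_pow_neg[OF assms, of 1 m] by (simp add: sign_def)

lemma det_frob:
  fixes f :: "nat \<Rightarrow> nat \<Rightarrow> 'a::comm_ring_1"
  assumes "prime (CHAR('a))"
  shows "det (mat n n (\<lambda>(i,j). f i j)) ^ (CHAR('a)^m) = det (mat n n (\<lambda>(i,j). f i j ^ (CHAR('a)^m)))"
  unfolding det_def
  by (simp add: frob_pow_sum[OF assms] power_mult_distrib frob_signof[OF assms] prod_power_distrib)

lemma subfield_0: "is_subfield K \<Longrightarrow> 0 \<in> K" by (simp add: is_subfield_def)
lemma subfield_1: "is_subfield K \<Longrightarrow> 1 \<in> K" by (simp add: is_subfield_def)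
lemma subfield_add: "is_subfield K \<Longrightarrow> x \<in> K \<Longrightarrow> y \<in> K \<Longrightarrow> x + y \<in> K" by (simp add: is_subfield_def)
lemma subfield_diff: "is_subfield K \<Longrightarrow> x \<in> K \<Longrightarrow> y \<in> K \<Longrightarrow> x - y \<in> K" by (simp add: is_subfield_def)
lemma subfield_mult: "is_subfield K \<Longrightarrow> x \<in> K \<Longrightarrow> y \<in> K \<Longrightarrow> x * y \<in> K" by (simp add: is_subfield_def)
lemma subfield_inverse: "is_subfield K \<Longrightarrow> x \<in> K \<Longrightarrow> inverse x \<in> K"
  by (cases "x = 0") (auto simp: is_subfield_def)
lemma subfield_uminus: "is_subfield K \<Longrightarrow> x \<in> K \<Longrightarrow> - x \<in> K"
  using subfield_diff[of K 0 x] subfield_0[of K] by simp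
lemma subfield_divide: "is_subfield K \<Longrightarrow> x \<in> K \<Longrightarrow> y \<in> K \<Longrightarrow> x / y \<in> K"
  by (simp add: divide_inverse subfield_mult subfield_inverse)
lemma subfield_power: "is_subfield K \<Longrightarrow> x \<in> K \<Longrightarrow> x ^ m \<in> K"
  by (induction m) (auto simp: subfield_1 subfield_mult)
lemma subfield_sum: "is_subfield K \<Longrightarrow> (\<And>x. x \<in> A \<Longrightarrow> f x \<in> K) \<Longrightarrow> sum f A \<in> K"
  by (induction A rule: infinite_finite_induct) (auto simp: subfield_0 subfield_add)
lemma subfield_prod: "is_subfield K \<Longrightarrow> (\<And>x. x \<in> A \<Longrightarrow> f x \<in> K) \<Longrightarrow> prod f A \<in> K"
  by (induction A rule: infinite_finite_induct) (auto simp: subfield_1 subfield_mult)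
lemma subfield_of_int: "is_subfield K \<Longrightarrow> of_int z \<in> K"
proof -
  assume K: "is_subfield K"
  have "of_nat m \<in> K" for m by (induction m) (auto simp: K subfield_0 subfield_1 subfield_add)
  then show ?thesis using K by (cases z rule: int_cases2) (auto simp: subfield_uminus)
qed
lemma subfield_poly: "is_subfield K \<Longrightarrow> F \<subseteq> K \<Longrightarrow> poly_over F g \<Longrightarrow> y \<in> K \<Longrightarrow> poly g y \<in> K"
  unfolding poly_altdef poly_over_def
  by (auto intro!: subfield_sum subfield_mult subfield_power)

lemma det_in_subfield:
  assumes K: "is_subfield K" and "\<And>i j. i < n \<Longrightarrow> j < n \<Longrightarrow> f i j \<in> K"
  shows "det (mat n n (\<lambda>(i,j). f i j)) \<in> K"
proof -
  have s: "(signof p :: 'a) \<in> K" for p using K by (simp add: sign_def subfield_1 subfield_uminus)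
  show ?thesis unfolding det_def
    using assms(2) by (auto intro!: subfield_sum subfield_mult subfield_prod s K simp: permutes_def)
qed

lemma gen_subfield_is: "is_subfield (gen_subfield F S)"
  unfolding gen_subfield_def is_subfield_def by auto
lemma gen_subfield_sup: "F \<union> S \<subseteq> gen_subfield F S"
  unfolding gen_subfield_def by auto
lemma gen_subfield_least: "is_subfield K \<Longrightarrow> F \<union> S \<subseteq> K \<Longrightarrow> gen_subfield F S \<subseteq> K"
  unfolding gen_subfield_def by auto

lemma roots_card_bound:
  fixes b :: "'a::field"
  assumes "s < r"
  shows "finite {x. x^r = b * x^s} \<and> card {x. x^r = b * x^s} \<le> r"
proof -
  define P where "P = monom (1::'a) r - monom b s"
  have ev: "poly P x = 0 \<longleftrightarrow> x^r = b * x^s" for x by (simp add: P_def poly_monom)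
  have c: "coeff P r = 1" using assms by (simp add: P_def coeff_monom)
  then have P0: "P \<noteq> 0" by auto
  have "degree P \<le> r" unfolding P_def
    by (rule degree_le) (use assms in \<open>auto simp: coeff_monom\<close>)
  moreover have "{x. x^r = b * x^s} = {x. poly P x = 0}" using ev by auto
  ultimately show ?thesis using card_poly_roots_bound[OF P0] poly_roots_finite[OF P0] by auto
qed



lemma fixed_pow:
  fixes x :: "'a::comm_ring_1"
  assumes "x^q = x" shows "x^(q^j) = x"
proof (induction j)
  case 0 then show ?case by simp
next
  case (Suc j)
  have "x^(q^Suc j) = (x^(q^j))^q" by (metis power_Suc2 power_mult)
  then show ?case using Suc assms by simp
qed

lemma moore_nonzero:
  fixes \<alpha> :: "nat \<Rightarrow> 'a::field"
  assumes p: "prime (CHAR('a))" and k: "k \<ge> 1" and q: "q = CHAR('a) ^ k"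
    and cardR: "card {x::'a. x^q = x} = q" and n: "n \<ge> 1"
    and indep: "\<forall>c. (\<forall>i<n. c i ^ q = c i) \<and> (\<Sum>i<n. c i * \<alpha> i) = 0 \<longrightarrow> (\<forall>i<n. c i = 0)"
  shows "det (mat n n (\<lambda>(i, j). \<alpha> i ^ (q ^ j))) \<noteq> 0"
proof
  define D where "D = mat n n (\<lambda>(i, j). \<alpha> i ^ (q ^ j))"
  define R where "R = {x::'a. x^q = x}"
  assume "det (mat n n (\<lambda>(i, j). \<alpha> i ^ (q ^ j))) = 0"
  then have "det D = 0" by (simp add: D_def)
  moreover have DC: "D \<in> carrier_mat n n" by (simp add: D_def)
  ultimately obtain v where v: "v \<in> carrier_vec n" "v \<noteq> 0\<^sub>v n" "D *\<^sub>v v = 0\<^sub>v n"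
    using det_0_iff_vec_prod_zero_field by blast
  have q1: "q > 1"
  proof -
    have "CHAR('a) > 1" using p prime_gt_1_nat by blast
    then have "CHAR('a) ^ k > 1" using k by (intro one_less_power) auto
    then show ?thesis using q by simp
  qed
  have h1: "(\<Sum>j<n. \<alpha> i ^ (q^j) * v$j) = 0" if i: "i < n" for i
  proof -
    have "(D *\<^sub>v v) $ i = 0" using v(3) i by simp
    then show ?thesis using i v(1) DC
      by (simp add: D_def scalar_prod_def atLeast0LessThan)
  qed
  obtain j0 where j0: "j0 < n" "v$j0 \<noteq> 0"
  proof -
    have "\<exists>j<n. v$j \<noteq> 0"
    proof (rule ccontr)
      assume "\<not> ?thesis"
      then have "v = 0\<^sub>v n" using v(1) by (intro eq_vecI) auto
      then show False using v(2) by simp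
    qed
    then show ?thesis using that by blast
  qed
  define M where "M = (\<Sum>j<n. monom (v$j) (q^j))"
  have polyM: "poly M x = (\<Sum>j<n. v$j * x^(q^j))" for x by (simp add: M_def poly_sum poly_monom)
  have inj: "q^j = q^j' \<longleftrightarrow> j = j'" for j j' using q1 by (simp add: power_inject_exp)
  have coeffM: "coeff M m = (\<Sum>j<n. if q^j = m then v$j else 0)" for m
    by (simp add: M_def coeff_sum coeff_monom)
  have "coeff M (q^j0) = v$j0"
    unfolding coeffM inj using j0 by (simp add: sum.delta)
  then have M0: "M \<noteq> 0" using j0 by auto
  have degM: "degree M \<le> q^(n-1)"
  proof (rule degree_le, intro allI impI)
    fix m assume m: "q^(n-1) < m"
    have "q^j \<noteq> m" if "j < n" for j
    proof -
      have "q^j \<le> q^(n-1)" using that q1 by (intro power_increasing) auto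
      then show ?thesis using m by auto
    qed
    then show "coeff M m = 0" unfolding coeffM by (intro sum.neutral) auto
  qed
  have finR: "finite R" using q1 cardR R_def by (intro card_ge_0_finite) auto
  have qj: "q^j = CHAR('a)^(k*j)" for j by (simp add: q power_mult)
  have root: "poly M (\<Sum>i<n. c i * \<alpha> i) = 0" if c: "\<forall>i<n. c i \<in> R" for c
  proof -
    have e: "(\<Sum>i<n. c i * \<alpha> i)^(q^j) = (\<Sum>i<n. c i * \<alpha> i ^(q^j))" for j
    proof -
      have "(\<Sum>i<n. c i * \<alpha> i)^(q^j) = (\<Sum>i<n. (c i * \<alpha> i)^(q^j))"
        unfolding qj by (rule frob_pow_sum[OF p])
      also have "\<dots> = (\<Sum>i<n. c i * \<alpha> i ^(q^j))"
        using c by (intro sum.cong refl) (simp add: power_mult_distrib fixed_pow R_def)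
      finally show ?thesis .
    qed
    have "poly M (\<Sum>i<n. c i * \<alpha> i) = (\<Sum>j<n. v$j * (\<Sum>i<n. c i * \<alpha> i ^(q^j)))"
      unfolding polyM e by (rule refl)
    also have "\<dots> = (\<Sum>j<n. \<Sum>i<n. c i * (\<alpha> i ^(q^j) * v$j))"
      unfolding sum_distrib_left by (intro sum.cong refl) (simp add: mult_ac)
    also have "\<dots> = (\<Sum>i<n. \<Sum>j<n. c i * (\<alpha> i ^(q^j) * v$j))"
      by (rule sum.swap)
    also have "\<dots> = (\<Sum>i<n. c i * (\<Sum>j<n. \<alpha> i ^(q^j) * v$j))"
      by (simp add: sum_distrib_left)
    also have "\<dots> = 0" by (rule sum.neutral) (simp add: h1)
    finally show ?thesis .
  qed
  define S where "S = (\<lambda>c. \<Sum>i<n. c i * \<alpha> i) ` (PiE {..<n} (\<lambda>_. R))"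
  have injS: "inj_on (\<lambda>c. \<Sum>i<n. c i * \<alpha> i) (PiE {..<n} (\<lambda>_. R))"
  proof (rule inj_onI)
    fix c c' assume c: "c \<in> PiE {..<n} (\<lambda>_. R)" and c': "c' \<in> PiE {..<n} (\<lambda>_. R)"
      and eq: "(\<Sum>i<n. c i * \<alpha> i) = (\<Sum>i<n. c' i * \<alpha> i)"
    define d where "d i = c i - c' i" for i
    have "\<forall>i<n. d i ^ q = d i"
    proof (intro allI impI)
      fix i assume i: "i < n"
      have "c i \<in> R" "c' i \<in> R" using c c' i by auto
      then show "d i ^ q = d i" unfolding d_def R_def q
        using frob_pow_diff[OF p, of "c i" "c' i" k] by simp
    qed
    moreover have "(\<Sum>i<n. d i * \<alpha> i) = 0"
      using eq unfolding d_def left_diff_distrib sum_subtractf by simp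
    ultimately have "\<forall>i<n. d i = 0" using indep by blast
    then show "c = c'" using c c' by (intro PiE_ext) (auto simp: d_def)
  qed
  have cR: "card R = q" using cardR R_def by simp
  have "card S = card (PiE {..<n} (\<lambda>_. R))" unfolding S_def by (rule card_image[OF injS])
  also have "\<dots> = q^n" by (simp add: card_PiE cR)
  finally have "card S = q^n" .
  moreover have "S \<subseteq> {x. poly M x = 0}" unfolding S_def using root by auto
  ultimately have "q^n \<le> card {x. poly M x = 0}"
    using poly_roots_finite[OF M0] card_mono by metis
  also have "\<dots> \<le> q^(n-1)" using card_poly_roots_bound[OF M0] degM by simp
  also have "\<dots> < q^n" using q1 n by (intro power_strict_increasing) auto
  finally show False by simp
qed

lemma qpoly_eval: "poly (q_poly q n a) x = x^(q^n) + (\<Sum>i<n. a i * x^(q^i))"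
  by (simp add: q_poly_def poly_sum poly_monom)

lemma moore_pow:
  fixes \<alpha> :: "nat \<Rightarrow> 'a::field"
  assumes p: "prime (CHAR('a))" and q: "q = CHAR('a) ^ k"
    and F: "is_subfield F" and n: "n \<ge> 1" and a: "\<forall>i<n. a i \<in> F"
    and roots: "\<forall>i<n. poly (q_poly q n a) (\<alpha> i) = 0"
    and nz: "det (mat n n (\<lambda>(i, j). \<alpha> i ^ (q ^ j))) \<noteq> 0"
  shows "det (mat n n (\<lambda>(i, j). \<alpha> i ^ (q ^ j))) ^ (q - 1) \<in> F"
proof -
  define D where "D = mat n n (\<lambda>(i, j). \<alpha> i ^ (q ^ j))"
  define C where "C = mat n n (\<lambda>(l, j). if j+1 < n then (if l = j+1 then 1 else 0) else - a l)"
  have DC: "D * C = mat n n (\<lambda>(i, j). \<alpha> i ^ (q ^ Suc j))"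
  proof (rule eq_matI)
    fix i j assume i: "i < dim_row (mat n n (\<lambda>(i, j). \<alpha> i ^ (q ^ Suc j)))"
      and j: "j < dim_col (mat n n (\<lambda>(i, j). \<alpha> i ^ (q ^ Suc j)))"
    have i': "i < n" and j': "j < n" using i j by auto
    have "(D * C) $$ (i,j) = (\<Sum>l<n. \<alpha> i ^ (q^l) * C $$ (l,j))"
      using i' j' by (simp add: D_def C_def scalar_prod_def atLeast0LessThan)
    also have "\<dots> = \<alpha> i ^ (q ^ Suc j)"
    proof (cases "j+1 < n")
      case True
      then have "(\<Sum>l<n. \<alpha> i ^ (q^l) * C $$ (l,j)) = (\<Sum>l<n. if l = j+1 then \<alpha> i ^ (q^l) else 0)"
        using j' by (intro sum.cong refl) (simp add: C_def)
      also have "\<dots> = \<alpha> i ^ (q^(j+1))" using True by (simp add: sum.delta)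
      finally show ?thesis by simp
    next
      case False
      then have jn: "Suc j = n" using j' by simp
      have "(\<Sum>l<n. \<alpha> i ^ (q^l) * C $$ (l,j)) = (\<Sum>l<n. - (a l * \<alpha> i ^ (q^l)))"
        using j' False by (intro sum.cong refl) (simp add: C_def)
      also have "\<dots> = - (\<Sum>l<n. a l * \<alpha> i ^ (q^l))" by (rule sum_negf)
      also have "\<dots> = \<alpha> i ^ (q^n)"
      proof -
        have "\<alpha> i ^ (q^n) + (\<Sum>l<n. a l * \<alpha> i ^ (q^l)) = 0"
          using roots i' by (simp add: qpoly_eval)
        then show ?thesis by (simp add: add_eq_0_iff)
      qed
      finally show ?thesis using jn by simp
    qed
    finally show "(D * C) $$ (i,j) = mat n n (\<lambda>(i, j). \<alpha> i ^ (q ^ Suc j)) $$ (i,j)"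
      using i' j' by simp
  next
    show "dim_row (D * C) = dim_row (mat n n (\<lambda>(i, j). \<alpha> i ^ (q ^ Suc j)))"
      by (simp add: D_def)
  next
    show "dim_col (D * C) = dim_col (mat n n (\<lambda>(i, j). \<alpha> i ^ (q ^ Suc j)))"
      by (simp add: C_def)
  qed
  have pw: "(x^(q^j))^q = x^(q^Suc j)" for x :: 'a and j by (metis power_Suc2 power_mult)
  have "det D ^ q = det (mat n n (\<lambda>(i, j). (\<alpha> i ^ (q ^ j)) ^ q))"
    unfolding D_def q by (rule det_frob[OF p])
  also have "\<dots> = det (mat n n (\<lambda>(i, j). \<alpha> i ^ (q ^ Suc j)))"
    by (simp only: pw)
  also have "\<dots> = det D * det C"
  proof -
    have "det (D * C) = det D * det C" by (rule det_mult[of _ n]) (simp_all add: D_def C_def)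
    then show ?thesis using DC by simp
  qed
  finally have eq: "det D ^ q = det D * det C" .
  have q0: "q > 0" using q p prime_gt_0_nat by simp
  then obtain q' where q': "q = Suc q'" using gr0_implies_Suc by blast
  have "det D ^ q = det D * det D ^ (q-1)" unfolding q' by simp
  moreover have "det D \<noteq> 0" using nz unfolding D_def .
  ultimately have "det D ^ (q-1) = det C" using eq by simp
  moreover have "det C \<in> F" unfolding C_def
  proof (rule det_in_subfield[OF F])
    fix l j assume l: "l < n" and "j < n"
    show "(if j+1 < n then (if l = j+1 then 1 else 0) else - a l) \<in> F"
      using a l F by (simp add: subfield_0 subfield_1 subfield_uminus)
  qed
  ultimately show ?thesis unfolding D_def by simp
qed



lemma poly_over_0: "is_subfield F \<Longrightarrow> poly_over F 0"
  by (simp add: poly_over_def subfield_0)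
lemma poly_over_const: "is_subfield F \<Longrightarrow> a \<in> F \<Longrightarrow> poly_over F [:a:]"
  by (simp add: poly_over_def subfield_0 coeff_pCons split: nat.splits)
lemma poly_over_1: "is_subfield F \<Longrightarrow> poly_over F 1"
  using poly_over_const[of F 1] by (simp add: subfield_1 one_pCons)
lemma poly_over_X: "is_subfield F \<Longrightarrow> poly_over F [:0,1:]"
  by (simp add: poly_over_def subfield_0 subfield_1 coeff_pCons split: nat.splits)
lemma poly_over_add: "is_subfield F \<Longrightarrow> poly_over F A \<Longrightarrow> poly_over F B \<Longrightarrow> poly_over F (A + B)"
  by (simp add: poly_over_def subfield_add)
lemma poly_over_diff: "is_subfield F \<Longrightarrow> poly_over F A \<Longrightarrow> poly_over F B \<Longrightarrow> poly_over F (A - B)"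
  by (simp add: poly_over_def subfield_diff)
lemma poly_over_uminus: "is_subfield F \<Longrightarrow> poly_over F A \<Longrightarrow> poly_over F (- A)"
  by (simp add: poly_over_def subfield_uminus)
lemma poly_over_smult: "is_subfield F \<Longrightarrow> a \<in> F \<Longrightarrow> poly_over F A \<Longrightarrow> poly_over F (smult a A)"
  by (simp add: poly_over_def subfield_mult)
lemma poly_over_monom: "is_subfield F \<Longrightarrow> a \<in> F \<Longrightarrow> poly_over F (monom a m)"
  by (simp add: poly_over_def subfield_0 coeff_monom)
lemma poly_over_mult: "is_subfield F \<Longrightarrow> poly_over F A \<Longrightarrow> poly_over F B \<Longrightarrow> poly_over F (A * B)"
  unfolding poly_over_def coeff_mult
  by (auto intro!: subfield_sum subfield_mult)
lemma poly_over_pcompose: "is_subfield F \<Longrightarrow> poly_over F A \<Longrightarrow> poly_over F B \<Longrightarrow> poly_over F (A \<circ>\<^sub>p B)"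
  unfolding poly_over_def
  by (intro allI coeff_pcompose_semiring_closed) (auto simp: subfield_0 subfield_add subfield_mult)
lemma poly_over_pCons: "poly_over F (pCons a A) \<Longrightarrow> a \<in> F \<and> poly_over F A"
  unfolding poly_over_def by (metis coeff_pCons_0 coeff_pCons_Suc)

lemma poly_over_divmod:
  assumes F: "is_subfield F" and B: "poly_over F B" "B \<noteq> 0"
  shows "poly_over F A \<Longrightarrow> poly_over F (A div B) \<and> poly_over F (A mod B)"
proof (induction "degree A" arbitrary: A rule: less_induct)
  case less
  show ?case
  proof (cases "degree A < degree B")
    case True
    then show ?thesis using less.prems by (simp add: div_poly_less mod_poly_less poly_over_0[OF F])
  next
    case False
    define c where "c = lead_coeff A / lead_coeff B"
    define m where "m = monom c (degree A - degree B)"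
    define A' where "A' = A - m * B"
    have cF: "c \<in> F" unfolding c_def using less.prems B F by (simp add: poly_over_def subfield_divide)
    have mF: "poly_over F m" unfolding m_def by (rule poly_over_monom[OF F cF])
    have A'F: "poly_over F A'" unfolding A'_def
      by (intro poly_over_diff poly_over_mult F mF B less.prems)
    have AA: "A = A' + m * B" by (simp add: A'_def)
    have dv: "A div B = m + A' div B" using AA B(2) by (metis div_mult_self1)
    have md: "A mod B = A' mod B" using AA by (metis mod_mult_self1)
    have "A' = 0 \<or> degree A' < degree A"
    proof (cases "A' = 0")
      case False
      have "degree (m * B) \<le> degree A"
        using degree_mult_le[of m B] degree_monom_le[of c "degree A - degree B"] False
        unfolding m_def using \<open>\<not> degree A < degree B\<close> by linarith
      then have dle: "degree A' \<le> degree A" unfolding A'_def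
        using degree_diff_le by blast
      have "coeff (m * B) (degree A) = c * lead_coeff B"
      proof -
        have "coeff (m * B) ((degree A - degree B) + degree B) = c * coeff B (degree B)"
          unfolding m_def coeff_monom_mult by simp
        then show ?thesis using \<open>\<not> degree A < degree B\<close> by simp
      qed
      then have "coeff A' (degree A) = 0" using B(2)
        by (simp add: A'_def c_def)
      then have "degree A' \<noteq> degree A" using False by (metis leading_coeff_0_iff)
      then show ?thesis using dle by simp
    qed simp
    then show ?thesis
    proof
      assume "A' = 0"
      then show ?thesis using dv md mF F by (simp add: poly_over_0)
    next
      assume "degree A' < degree A"
      from less.hyps[OF this A'F] show ?thesis
        using dv md mF F by (simp add: poly_over_add)
    qed
  qed
qed

lemma irred_dvd:
  assumes F: "is_subfield F" and P: "irreducible_over F P" and Px: "poly P x = 0"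
    and Q: "poly_over F Q" "Q \<noteq> 0" "poly Q x = 0"
  shows "P dvd Q"
proof -
  define S where "S = {R. poly_over F R \<and> R \<noteq> 0 \<and> poly R x = 0}"
  have "Q \<in> S" using Q by (simp add: S_def)
  then obtain M where M: "M \<in> S" and Mmin: "\<And>R. R \<in> S \<Longrightarrow> degree M \<le> degree R"
    using ex_has_least_nat[of "\<lambda>R. R \<in> S" Q degree] by blast
  have MF: "poly_over F M" "M \<noteq> 0" "poly M x = 0" using M by (auto simp: S_def)
  have key: "M dvd R" if R: "poly_over F R" "poly R x = 0" for R
  proof (rule ccontr)
    assume nd: "\<not> M dvd R"
    then have r0: "R mod M \<noteq> 0" by (simp add: mod_eq_0_iff_dvd)
    have "poly_over F (R mod M)" using poly_over_divmod[OF F MF(1,2) R(1)] by simp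
    moreover have "poly (R mod M) x = 0"
    proof -
      have "R = R div M * M + R mod M" by simp
      then have "poly R x = poly (R div M) x * poly M x + poly (R mod M) x"
        by (metis poly_add poly_mult)
      then show ?thesis using R MF by simp
    qed
    ultimately have "R mod M \<in> S" using r0 by (simp add: S_def)
    then have "degree M \<le> degree (R mod M)" by (rule Mmin)
    moreover have "degree (R mod M) < degree M" using degree_mod_less'[OF MF(2) r0] .
    ultimately show False by simp
  qed
  have PF: "poly_over F P" and Pdeg: "degree P \<ge> 1" using P by (auto simp: irreducible_over_def)
  then have P0: "P \<noteq> 0" by auto
  have MP: "M dvd P" using key[OF PF Px] .
  define H where "H = P div M"
  have PMH: "P = M * H" using MP by (simp add: H_def)
  have HF: "poly_over F H" using poly_over_divmod[OF F MF(1,2) PF] by (simp add: H_def)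
  have Mdeg: "degree M \<ge> 1"
  proof (rule ccontr)
    assume "\<not> degree M \<ge> 1"
    then have "degree M = 0" by simp
    then obtain m0 where "M = [:m0:]" by (metis degree_eq_zeroE)
    then show False using MF by simp
  qed
  have "\<not> degree H \<ge> 1" using P HF MF(1) Mdeg PMH by (auto simp: irreducible_over_def)
  then have "degree H = 0" by simp
  moreover have "H \<noteq> 0" using P0 PMH by auto
  ultimately have "is_unit H" by (simp add: is_unit_iff_degree)
  moreover have "M dvd Q" using key[OF Q(1) Q(3)] .
  ultimately show ?thesis using PMH by (simp add: mult_unit_dvd_iff)
qed

lemma dvd_split:
  fixes P :: "'a::field poly"
  shows "P dvd (\<Prod>r\<leftarrow>rs. [:-r,1:]) \<Longrightarrow> P \<noteq> 0 \<Longrightarrow>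
    \<exists>c rs'. P = smult c (\<Prod>r\<leftarrow>rs'. [:-r,1:]) \<and> set rs' \<subseteq> set rs"
proof (induction rs arbitrary: P)
  case Nil
  then have "is_unit P" by simp
  then have "degree P = 0" using Nil.prems(2) by (simp add: is_unit_iff_degree)
  then obtain c where "P = [:c:]" by (metis degree_eq_zeroE)
  then have "P = smult c (\<Prod>r\<leftarrow>[]. [:-r,1:])" by simp
  then show ?case by blast
next
  case (Cons r rs)
  show ?case
  proof (cases "poly P r = 0")
    case True
    then have "[:-r,1:] dvd P" by (simp add: poly_eq_0_iff_dvd)
    then obtain P' where P': "P = [:-r,1:] * P'" by (auto elim: dvdE)
    have h: "[:-r,1:] * P' dvd [:-r,1:] * (\<Prod>r\<leftarrow>rs. [:-r,1:])"
      using Cons.prems(1) P' by (metis list.simps(9) prod_list.Cons)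
    have nz: "[:-r,1:] \<noteq> (0::'a poly)" by simp
    have "P' \<noteq> 0" using P' Cons.prems(2) by auto
    moreover have "P' dvd (\<Prod>r\<leftarrow>rs. [:-r,1:])"
      using h by (rule dvd_times_left_cancel_iff[OF nz, THEN iffD1])
    ultimately obtain c rs' where "P' = smult c (\<Prod>r\<leftarrow>rs'. [:-r,1:])" "set rs' \<subseteq> set rs"
      using Cons.IH by blast
    then have "P = smult c (\<Prod>r\<leftarrow>r#rs'. [:-r,1:]) \<and> set (r#rs') \<subseteq> set (r#rs)"
      using P' by auto
    then show ?thesis by blast
  next
    case False
    obtain T where T: "[:-r,1:] * (\<Prod>r\<leftarrow>rs. [:-r,1:]) = P * T"
      using Cons.prems(1) by (auto elim: dvdE)
    have "poly P r * poly T r = 0"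
      using arg_cong[OF T, of "\<lambda>X. poly X r"] by simp
    then have "poly T r = 0" using False by simp
    then obtain T' where T': "T = [:-r,1:] * T'" by (auto simp: poly_eq_0_iff_dvd elim: dvdE)
    have nz: "[:-r,1:] \<noteq> (0::'a poly)" by simp
    have "[:-r,1:] * (\<Prod>r\<leftarrow>rs. [:-r,1:]) = [:-r,1:] * (P * T')"
      using T T' by (simp only: mult.left_commute)
    then have "(\<Prod>r\<leftarrow>rs. [:-r,1:]) = P * T'" using nz by (rule mult_left_cancel[THEN iffD1, rotated])
    then have "P dvd (\<Prod>r\<leftarrow>rs. [:-r,1:])" by simp
    then obtain c rs' where "P = smult c (\<Prod>r\<leftarrow>rs'. [:-r,1:])" "set rs' \<subseteq> set rs"
      using Cons.IH Cons.prems(2) by blast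
    then show ?thesis by auto
  qed
qed

lemma inv_poly:
  assumes F: "is_subfield F" and y: "y \<noteq> 0"
  shows "poly_over F Q \<Longrightarrow> Q \<noteq> 0 \<Longrightarrow> poly Q y = 0 \<Longrightarrow> \<exists>h. poly_over F h \<and> inverse y = poly h y"
proof (induction Q rule: pCons_induct)
  case 0 then show ?case by simp
next
  case (pCons a Q')
  have aF: "a \<in> F" and QF: "poly_over F Q'" using poly_over_pCons[OF pCons.prems(1)] by auto
  have ev: "a + y * poly Q' y = 0" using pCons.prems(3) by simp
  show ?case
  proof (cases "a = 0")
    case True
    then have "poly Q' y = 0" using ev y by simp
    moreover have "Q' \<noteq> 0" using True pCons.hyps by simp
    ultimately show ?thesis using pCons.IH QF by blast
  next
    case False
    have t: "y * poly Q' y = - a" using ev by (simp add: add_eq_0_iff)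
    have t2: "poly Q' y = - a / y" using t y by (metis nonzero_mult_div_cancel_left)
    have "inverse y = poly (smult (- inverse a) Q') y"
      using False y by (simp add: t2 field_simps)
    moreover have "poly_over F (smult (- inverse a) Q')"
      using F aF QF by (intro poly_over_smult) (auto simp: subfield_uminus subfield_inverse)
    ultimately show ?thesis by blast
  qed
qed

lemma hom_sum:
  assumes "f 0 = 0" "\<And>x y. f (x + y) = f x + f y"
  shows "f (sum g A) = (\<Sum>x\<in>A. f (g x))"
  by (induction A rule: infinite_finite_induct) (auto simp: assms)

lemma map_poly_hom_mult:
  fixes f :: "'b::comm_ring_1 \<Rightarrow> 'c::comm_ring_1"
  assumes f0: "f 0 = 0" and fa: "\<And>x y. f (x + y) = f x + f y" and fm: "\<And>x y. f (x * y) = f x * f y"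
  shows "map_poly f (p * q) = map_poly f p * map_poly f q"
  by (rule poly_eqI) (simp add: coeff_map_poly[of f, OF f0] coeff_mult hom_sum[of f, OF f0 fa] fm)

lemma map_poly_hom_prod:
  fixes f :: "'b::comm_ring_1 \<Rightarrow> 'c::comm_ring_1"
  assumes f0: "f 0 = 0" and f1: "f 1 = 1" and fa: "\<And>x y. f (x + y) = f x + f y" and fm: "\<And>x y. f (x * y) = f x * f y"
  shows "map_poly f (\<Prod>x\<in>A. g x) = (\<Prod>x\<in>A. map_poly f (g x))"
proof (induction A rule: infinite_finite_induct)
  case (infinite A)
  then show ?case by (simp add: one_pCons map_poly_pCons[of f, OF f0] f1)
next
  case empty
  then show ?case by (simp add: one_pCons map_poly_pCons[of f, OF f0] f1)
next
  case (insert x F)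
  then show ?case by (simp add: map_poly_hom_mult[of f, OF f0 fa fm])
qed

lemma invariant_in_F:
  fixes \<delta> :: "'a::field"
  assumes F: "is_subfield F" and h: "poly_over F h" and U: "finite U" "card U = N" "N \<ge> 1"
    and Uroot: "\<forall>\<zeta>\<in>U. \<zeta>^N = 1" and inv: "\<forall>\<zeta>\<in>U. \<forall>i. \<zeta>^i * coeff h i = coeff h i"
    and d: "\<delta>^N \<in> F"
  shows "poly h \<delta> \<in> F"
  unfolding poly_altdef
proof (rule subfield_sum[OF F])
  fix i assume "i \<in> {..degree h}"
  show "coeff h i * \<delta>^i \<in> F"
  proof (cases "coeff h i = 0")
    case True then show ?thesis by (simp add: subfield_0 F)
  next
    case False
    then have z: "\<forall>\<zeta>\<in>U. \<zeta>^i = 1" using inv by (metis mult_cancel_right2)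
    define r where "r = i mod N"
    have ieq: "i = N * (i div N) + r" by (simp add: r_def)
    have zr: "\<forall>\<zeta>\<in>U. \<zeta>^r = 1"
    proof
      fix \<zeta> assume "\<zeta> \<in> U"
      then have "\<zeta>^i = 1" "\<zeta>^N = 1" using z Uroot by auto
      then show "\<zeta>^r = 1" using ieq by (metis power_add power_mult power_one mult_1)
    qed
    have r0: "r = 0"
    proof (rule ccontr)
      assume "r \<noteq> 0"
      moreover have rN: "r < N" using U(3) by (simp add: r_def)
      ultimately have "finite {x::'a. x^r = 1 * x^0} \<and> card {x::'a. x^r = 1 * x^0} \<le> r"
        by (intro roots_card_bound) simp
      moreover have "U \<subseteq> {x::'a. x^r = 1 * x^0}" using zr by auto
      ultimately have "card U \<le> r" by (meson card_mono order_trans)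
      then show False using rN U(2) by simp
    qed
    then have "\<delta>^i = (\<delta>^N)^(i div N)" using ieq by (metis add_0_right power_mult)
    then have "\<delta>^i \<in> F" using d F by (simp add: subfield_power)
    moreover have "coeff h i \<in> F" using h by (simp add: poly_over_def)
    ultimately show ?thesis by (simp add: subfield_mult F)
  qed
qed



lemma poly_over_sum: "is_subfield F \<Longrightarrow> (\<And>x. x \<in> A \<Longrightarrow> poly_over F (f x)) \<Longrightarrow> poly_over F (sum f A)"
  by (induction A rule: infinite_finite_induct) (auto simp: poly_over_0 poly_over_add)

lemma coeffs_mult_closed:
  assumes F: "is_subfield F" and "\<forall>i. poly_over F (coeff A i)" and "\<forall>i. poly_over F (coeff B i)"
  shows "\<forall>k. poly_over F (coeff (A * B) k)"
  unfolding coeff_mult using assms by (auto intro!: poly_over_sum poly_over_mult)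

lemma coeffs_prod_closed:
  assumes F: "is_subfield F" and "\<And>x. x \<in> A \<Longrightarrow> \<forall>i. poly_over F (coeff (f x) i)"
  shows "\<forall>k. poly_over F (coeff (\<Prod>x\<in>A. f x) k)"
  using assms(2)
proof (induction A rule: infinite_finite_induct)
  case (infinite A)
  then show ?case using F by (auto simp: coeff_pCons one_pCons poly_over_1 poly_over_0 poly_over_const subfield_1 split: nat.splits)
next
  case empty
  then show ?case using F by (auto simp: coeff_pCons one_pCons poly_over_1 poly_over_0 poly_over_const subfield_1 split: nat.splits)
next
  case (insert x A)
  then show ?case by (simp add: coeffs_mult_closed[OF F])
qed

lemma pcompose_lin: "[:0,a:] \<circ>\<^sub>p [:0,b:] = [:0, a*b::'a::comm_ring_1:]"
  by (simp add: pcompose_pCons)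

lemma normal_part:
  fixes \<delta> :: "'a::field"
  assumes F: "is_subfield F" and U: "finite U" "U \<subseteq> F" "1 \<in> U" "card U = N"
    and mulU: "\<forall>x\<in>U. \<forall>y\<in>U. x*y \<in> U" and invU: "\<forall>x\<in>U. inverse x \<in> U"
    and rootU: "\<forall>x\<in>U. x^N = 1" and d: "\<delta>^N \<in> F"
  shows "normal_extension F (gen_subfield F {\<delta>})"
proof -
  have N1: "N \<ge> 1" using U card_0_eq by fastforce
  have U0: "0 \<notin> U" using rootU N1 by (metis power_0_left not_one_le_zero zero_neq_one)
  define Q where "Q g = (\<Prod>\<zeta>\<in>U. [:-poly g (\<zeta>*\<delta>), 1:])" for g
  have Q1: "poly_over F (Q g)" if g: "poly_over F g" for g
  proof -
    define gs where "gs \<zeta> = g \<circ>\<^sub>p [:0,\<zeta>:]" for \<zeta>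
    define W where "W = (\<Prod>\<zeta>\<in>U. [:-gs \<zeta>, 1:])"
    have ev: "map_poly (\<lambda>h. poly h \<delta>) W = Q g"
    proof -
      have "map_poly (\<lambda>h. poly h \<delta>) W = (\<Prod>\<zeta>\<in>U. map_poly (\<lambda>h. poly h \<delta>) [:-gs \<zeta>, 1:])"
        unfolding W_def by (rule map_poly_hom_prod) auto
      also have "\<dots> = Q g" unfolding Q_def
        by (intro prod.cong refl) (simp add: map_poly_pCons gs_def poly_pcompose mult.commute)
      finally show ?thesis .
    qed
    have inv: "map_poly (\<lambda>h. h \<circ>\<^sub>p [:0,\<zeta>':]) W = W" if z': "\<zeta>' \<in> U" for \<zeta>'
    proof -
      have "map_poly (\<lambda>h. h \<circ>\<^sub>p [:0,\<zeta>':]) W = (\<Prod>\<zeta>\<in>U. map_poly (\<lambda>h. h \<circ>\<^sub>p [:0,\<zeta>':]) [:-gs \<zeta>, 1:])"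
        unfolding W_def by (rule map_poly_hom_prod) (auto simp: pcompose_1 pcompose_add pcompose_mult)
      also have "\<dots> = (\<Prod>\<zeta>\<in>U. [:-gs (\<zeta>*\<zeta>'), 1:])"
        by (intro prod.cong refl)
          (simp add: map_poly_pCons gs_def pcompose_uminus pcompose_1 pcompose_assoc[symmetric] pcompose_lin)
      also have "\<dots> = W" unfolding W_def
      proof (rule prod.reindex_bij_betw)
        show "bij_betw (\<lambda>\<zeta>. \<zeta>*\<zeta>') U U"
        proof (rule bij_betw_imageI)
          show "inj_on (\<lambda>\<zeta>. \<zeta>*\<zeta>') U" using z' U0 by (auto intro: inj_onI)
          show "(\<lambda>\<zeta>. \<zeta>*\<zeta>') ` U = U"
          proof
            show "(\<lambda>\<zeta>. \<zeta>*\<zeta>') ` U \<subseteq> U" using mulU z' by auto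
            show "U \<subseteq> (\<lambda>\<zeta>. \<zeta>*\<zeta>') ` U"
            proof
              fix y assume y: "y \<in> U"
              have "y * inverse \<zeta>' \<in> U" using mulU invU y z' by auto
              moreover have "y = (y * inverse \<zeta>') * \<zeta>'" using z' U0 by (metis divide_inverse nonzero_eq_divide_eq)
              ultimately show "y \<in> (\<lambda>\<zeta>. \<zeta>*\<zeta>') ` U" by blast
            qed
          qed
        qed
      qed
      finally show ?thesis .
    qed
    have WF: "\<forall>k. poly_over F (coeff W k)" unfolding W_def
    proof (rule coeffs_prod_closed[OF F])
      fix \<zeta> assume z: "\<zeta> \<in> U"
      have "poly_over F (gs \<zeta>)" unfolding gs_def using g z U F
        by (intro poly_over_pcompose F) (auto simp: poly_over_def coeff_pCons subfield_0 split: nat.splits)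
      then show "\<forall>i. poly_over F (coeff [:-gs \<zeta>, 1:] i)"
        using F by (auto simp: coeff_pCons poly_over_uminus poly_over_1 poly_over_0 split: nat.splits)
    qed
    show ?thesis unfolding poly_over_def
    proof
      fix k
      have "coeff (Q g) k = poly (coeff W k) \<delta>" unfolding ev[symmetric] by (simp add: coeff_map_poly)
      also have "\<dots> \<in> F"
      proof (rule invariant_in_F[OF F WF[rule_format] U(1) U(4) N1 rootU _ d])
        show "\<forall>\<zeta>\<in>U. \<forall>i. \<zeta> ^ i * coeff (coeff W k) i = coeff (coeff W k) i"
        proof (intro ballI allI)
          fix \<zeta> i assume z: "\<zeta> \<in> U"
          have "coeff (coeff W k \<circ>\<^sub>p [:0,\<zeta>:]) i = coeff (coeff W k) i"
            using arg_cong[OF inv[OF z], of "\<lambda>X. coeff (coeff X k) i"] by (simp add: coeff_map_poly)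
          then show "\<zeta> ^ i * coeff (coeff W k) i = coeff (coeff W k) i"
            by (simp add: coeff_pcompose_linear)
        qed
      qed
      finally show "coeff (Q g) k \<in> F" .
    qed
  qed
  have Q2: "Q g \<noteq> 0" for g unfolding Q_def using U(1) by (simp add: prod_zero_iff)
  have Q3: "poly (Q g) (poly g \<delta>) = 0" for g
    unfolding Q_def poly_prod using U(1) U(3) by (auto simp: prod_zero_iff intro!: bexI[of _ 1])
  have Q4: "\<exists>rs. Q g = (\<Prod>r\<leftarrow>rs. [:-r,1:]) \<and> set rs = (\<lambda>\<zeta>. poly g (\<zeta>*\<delta>)) ` U" for g
  proof -
    obtain xs where xs: "set xs = U" "distinct xs" using finite_distinct_list[OF U(1)] by blast
    have "Q g = (\<Prod>r\<leftarrow>map (\<lambda>\<zeta>. poly g (\<zeta>*\<delta>)) xs. [:-r,1:])"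
      unfolding Q_def xs(1)[symmetric] prod.distinct_set_conv_list[OF xs(2)] by (simp add: o_def)
    moreover have "set (map (\<lambda>\<zeta>. poly g (\<zeta>*\<delta>)) xs) = (\<lambda>\<zeta>. poly g (\<zeta>*\<delta>)) ` U"
      using xs(1) by simp
    ultimately show ?thesis by blast
  qed
  define K where "K = gen_subfield F {\<delta>}"
  have Kf: "is_subfield K" unfolding K_def by (rule gen_subfield_is)
  have FK: "F \<subseteq> K" and dK: "\<delta> \<in> K" using gen_subfield_sup[of F "{\<delta>}"] by (auto simp: K_def)
  define Sd where "Sd = {y. \<exists>g. poly_over F g \<and> y = poly g \<delta>}"
  have Sdf: "is_subfield Sd" unfolding is_subfield_def
  proof (intro conjI ballI impI)
    show "0 \<in> Sd" unfolding Sd_def using poly_over_0[OF F] by force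
    show "1 \<in> Sd" unfolding Sd_def using poly_over_1[OF F] by force
    fix x y assume x: "x \<in> Sd" and y: "y \<in> Sd"
    from x obtain g1 where g1: "poly_over F g1" "x = poly g1 \<delta>" by (auto simp: Sd_def)
    from y obtain g2 where g2: "poly_over F g2" "y = poly g2 \<delta>" by (auto simp: Sd_def)
    show "x + y \<in> Sd" unfolding Sd_def using g1 g2 poly_over_add[OF F g1(1) g2(1)] by force
    show "x - y \<in> Sd" unfolding Sd_def using g1 g2 poly_over_diff[OF F g1(1) g2(1)] by force
    show "x * y \<in> Sd" unfolding Sd_def using g1 g2 poly_over_mult[OF F g1(1) g2(1)] by force
  next
    fix x assume x: "x \<in> Sd" and x0: "x \<noteq> 0"
    from x obtain g where g: "poly_over F g" "x = poly g \<delta>" by (auto simp: Sd_def)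
    obtain h where h: "poly_over F h" "inverse x = poly h x"
      using inv_poly[OF F x0 Q1[OF g(1)] Q2] Q3 g by blast
    have "inverse x = poly (h \<circ>\<^sub>p g) \<delta>" using h g by (simp add: poly_pcompose)
    then show "inverse x \<in> Sd" unfolding Sd_def using poly_over_pcompose[OF F h(1) g(1)] by blast
  qed
  have "F \<union> {\<delta>} \<subseteq> Sd"
  proof
    fix x assume "x \<in> F \<union> {\<delta>}"
    then show "x \<in> Sd"
    proof
      assume "x \<in> F"
      then show ?thesis unfolding Sd_def using poly_over_const[OF F] by force
    next
      assume "x \<in> {\<delta>}"
      then have "x = poly [:0,1:] \<delta>" by simp
      then show ?thesis unfolding Sd_def using poly_over_X[OF F] by blast
    qed
  qed
  then have KS: "K \<subseteq> Sd" unfolding K_def by (rule gen_subfield_least[OF Sdf])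
  have rootsK: "poly g (\<zeta>*\<delta>) \<in> K" if "poly_over F g" "\<zeta> \<in> U" for g \<zeta>
    using that Kf FK dK U(2) by (intro subfield_poly[OF Kf FK]) (auto intro: subfield_mult)
  show ?thesis unfolding normal_extension_def K_def[symmetric]
  proof (intro conjI allI ballI impI)
    show "is_subfield F" by (rule F)
    show "is_subfield K" by (rule Kf)
    show "F \<subseteq> K" by (rule FK)
  next
    fix x assume "x \<in> K"
    then obtain g where g: "poly_over F g" "x = poly g \<delta>" using KS by (auto simp: Sd_def)
    show "algebraic_over F x" unfolding algebraic_over_def
      using Q1[OF g(1)] Q2 Q3 g(2) by blast
  next
    fix P assume P: "irreducible_over F P \<and> (\<exists>x\<in>K. poly P x = 0)"
    then obtain x where x: "x \<in> K" "poly P x = 0" by blast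
    then obtain g where g: "poly_over F g" "x = poly g \<delta>" using KS by (auto simp: Sd_def)
    have "P dvd Q g" using irred_dvd[OF F _ x(2) Q1[OF g(1)] Q2] P Q3 g(2) by blast
    moreover obtain rs where rs: "Q g = (\<Prod>r\<leftarrow>rs. [:-r,1:])" "set rs = (\<lambda>\<zeta>. poly g (\<zeta>*\<delta>)) ` U"
      using Q4 by blast
    moreover have "P \<noteq> 0" using P by (auto simp: irreducible_over_def)
    ultimately obtain c rs' where "P = smult c (\<Prod>r\<leftarrow>rs'. [:-r,1:])" "set rs' \<subseteq> set rs"
      using dvd_split by metis
    moreover have "set rs \<subseteq> K" using rs(2) rootsK g(1) by auto
    ultimately show "splits_in K P" unfolding splits_in_def by blast
  qed
qed


theorem lemma2p1:
  fixes p q k n :: nat and F E :: "'a::field set" and a \<alpha> :: "nat \<Rightarrow> 'a"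
  assumes "prime p" and "CHAR('a) = p" and "k \<ge> 1" and "q = p ^ k"
    and "is_subfield F"
    and "card {x \<in> F. x ^ q = x} = q"
    and "n \<ge> 1"
    and "\<forall>i<n. a i \<in> F" and "a 0 \<noteq> 0"
    and "is_splitting_field F E (q_poly q n a)"
    and "\<forall>i<n. \<alpha> i \<in> E \<and> poly (q_poly q n a) (\<alpha> i) = 0"
    and "\<forall>c. (\<forall>i<n. c i ^ q = c i) \<and> (\<Sum>i<n. c i * \<alpha> i) = 0 \<longrightarrow> (\<forall>i<n. c i = 0)"
    and "{x \<in> E. poly (q_poly q n a) x = 0} =
           {\<Sum>i<n. c i * \<alpha> i | c. \<forall>i<n. c i ^ q = c i}"
  shows "det (mat n n (\<lambda>(i, j). \<alpha> i ^ (q ^ j))) \<noteq> 0 \<and>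
         det (mat n n (\<lambda>(i, j). \<alpha> i ^ (q ^ j))) ^ (q - 1) \<in> F \<and>
         normal_extension F (gen_subfield F {det (mat n n (\<lambda>(i, j). \<alpha> i ^ (q ^ j)))})"
proof -
  have p': "prime (CHAR('a))" using assms(1,2) by simp
  have qC: "q = CHAR('a)^k" using assms(2,4) by simp
  have q1: "q > 1"
  proof -
    have "CHAR('a) > 1" using p' prime_gt_1_nat by blast
    then have "CHAR('a) ^ k > 1" using assms(3) by (intro one_less_power) auto
    then show ?thesis using qC by simp
  qed
  define R where "R = {x::'a. x^q = x}"
  have "finite {x::'a. x^q = 1 * x^1} \<and> card {x::'a. x^q = 1 * x^1} \<le> q"
    by (rule roots_card_bound) (use q1 in simp)
  then have finR: "finite R" and cRle: "card R \<le> q" by (simp_all add: R_def)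
  have sub: "{x\<in>F. x^q = x} \<subseteq> R" by (auto simp: R_def)
  have eqR: "{x\<in>F. x^q = x} = R"
    using card_seteq[OF finR sub] cRle assms(6) by simp
  have RF: "R \<subseteq> F" using eqR by blast
  have cR: "card R = q" using eqR assms(6) by simp
  have cardR: "card {x::'a. x^q = x} = q" using cR by (simp add: R_def)
  have nz: "det (mat n n (\<lambda>(i, j). \<alpha> i ^ (q ^ j))) \<noteq> 0"
    by (rule moore_nonzero[OF p' assms(3) qC cardR assms(7) assms(12)])
  have roots: "\<forall>i<n. poly (q_poly q n a) (\<alpha> i) = 0" using assms(11) by blast
  have pw: "det (mat n n (\<lambda>(i, j). \<alpha> i ^ (q ^ j))) ^ (q - 1) \<in> F"
    by (rule moore_pow[OF p' qC assms(5) assms(7) assms(8) roots nz])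
  define U where "U = R - {0}"
  have R0: "0 \<in> R" using q1 by (simp add: R_def)
  have cU: "card U = q - 1" unfolding U_def using R0 finR cR by (simp add: card_Diff_singleton)
  have U1: "1 \<in> U" by (simp add: U_def R_def)
  have mulU: "\<forall>x\<in>U. \<forall>y\<in>U. x*y \<in> U" by (auto simp: U_def R_def power_mult_distrib)
  have invU: "\<forall>x\<in>U. inverse x \<in> U" by (auto simp: U_def R_def power_inverse)
  have rootU: "\<forall>x\<in>U. x^(q-1) = 1"
  proof
    fix x assume x: "x \<in> U"
    then have xq: "x^q = x" and x0: "x \<noteq> 0" by (auto simp: U_def R_def)
    obtain q' where q': "q = Suc q'" using q1 by (metis Suc_pred not_gr0 not_less0 zero_less_one less_trans)
    have "x * x^(q-1) = x * 1" using xq q' by simp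
    then show "x^(q-1) = 1" using x0 by (metis mult_left_cancel)
  qed
  have norm: "normal_extension F (gen_subfield F {det (mat n n (\<lambda>(i, j). \<alpha> i ^ (q ^ j)))})"
    by (rule normal_part[OF assms(5) _ _ U1 cU mulU invU rootU pw])
       (use finR RF in \<open>auto simp: U_def\<close>)
  show ?thesis using nz pw norm by blast
qed

end
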